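(* For any $\delta>0$ and $s\in\mathbb{N}$ there is $C>0$ such that for any $m,n$ with $n\ge s$ and any $\mathcal{F}\subset[m]^n$ with $\mu(\mathcal{F})\ge e^{-n/C}$, if $\mathbf{S}\in\binom{[n]}{s}$ and $\mathbf{x}\in[m]^{\mathbf{S}}$ are uniformly random, then $\Pr[\mu(\mathcal{F}_{\mathbf{S}\to\mathbf{x}})\ge(1-\delta)\mu(\mathcal{F})]\ge1-\delta$.
   Context: $\mu$ denotes the uniform probability measure on the relevant product space $[m]^I$. For $S\subset[n]$ and $x\in[m]^S$, $\mathcal{F}_{S\to x}=\{z\in[m]^{[n]\setminus S}:(z_S=x, z_{[n]\setminus S}=z)\in\mathcal{F}\}\subset[m]^{[n]\setminus S}$. *)

theory Defs
  imports "HOL-Analysis.Analysis"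
begin

definition cube :: "nat set \<Rightarrow> nat \<Rightarrow> (nat \<Rightarrow> nat) set" where
  "cube I m = PiE I (\<lambda>_. {..<m})"

definition mu :: "nat set \<Rightarrow> nat \<Rightarrow> (nat \<Rightarrow> nat) set \<Rightarrow> real" where
  "mu I m F = real (card F) / real (card (cube I m))"

definition restr :: "nat \<Rightarrow> nat \<Rightarrow> (nat \<Rightarrow> nat) set \<Rightarrow> nat set \<Rightarrow> (nat \<Rightarrow> nat) \<Rightarrow> (nat \<Rightarrow> nat) set" where
  "restr n m F S x = {z \<in> cube ({..<n} - S) m. (\<lambda>i. if i \<in> S then x i else z i) \<in> F}"

definition samples :: "nat \<Rightarrow> nat \<Rightarrow> nat \<Rightarrow> (nat set \<times> (nat \<Rightarrow> nat)) set" where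
  "samples n m s = {(S, x). S \<subseteq> {..<n} \<and> card S = s \<and> x \<in> cube S m}"

end

theory Submission
  imports Defs
begin


definition agr :: "nat set \<Rightarrow> (nat\<Rightarrow>nat) \<Rightarrow> (nat\<Rightarrow>nat) \<Rightarrow> bool" where
  "agr T y z \<longleftrightarrow> (\<forall>i\<in>T. y i = z i)"

definition cnt :: "(nat\<Rightarrow>nat) set \<Rightarrow> nat set \<Rightarrow> (nat\<Rightarrow>nat) \<Rightarrow> nat" where
  "cnt F T y = card {z\<in>F. agr T y z}"

definition Ent :: "(nat\<Rightarrow>nat) set \<Rightarrow> nat set \<Rightarrow> real" where
  "Ent F T = (\<Sum>y\<in>F. ln (real (cnt F T y)))"

lemma card_filter_sum: "finite F \<Longrightarrow> real (card {z\<in>F. P z}) = (\<Sum>z\<in>F. if P z then 1 else 0)"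
  by (simp add: sum.inter_filter[symmetric])

lemma cnt_pos: "finite F \<Longrightarrow> y \<in> F \<Longrightarrow> cnt F T y > 0"
  unfolding cnt_def by (rule card_gt_0_iff[THEN iffD2]) (auto simp: agr_def)

lemma cnt_cong: assumes "agr T y y'" shows "cnt F T y = cnt F T y'"
proof -
  have "{z\<in>F. agr T y z} = {z\<in>F. agr T y' z}" using assms unfolding agr_def by auto
  thus ?thesis unfolding cnt_def by simp
qed

lemma ratio_sum_le:
  assumes fin: "finite F"
  shows "(\<Sum>y\<in>F. real (cnt F P y) * real (cnt F Q y) / (real (cnt F (P\<union>Q) y) * real (cnt F (P\<inter>Q) y))) \<le> real (card F)"
proof -
  define D where "D y = real (cnt F (P\<union>Q) y) * real (cnt F (P\<inter>Q) y)" for y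
  have "(\<Sum>y\<in>F. real (cnt F P y) * real (cnt F Q y) / D y)
     = (\<Sum>y\<in>F. \<Sum>z\<in>F. \<Sum>t\<in>F. if agr P y z \<and> agr Q y t then 1 / D y else 0)"
  proof (rule sum.cong[OF refl])
    fix y assume "y \<in> F"
    have "real (cnt F P y) * real (cnt F Q y) = (\<Sum>z\<in>F. \<Sum>t\<in>F. (if agr P y z then 1 else 0) * (if agr Q y t then 1 else 0))"
      unfolding cnt_def card_filter_sum[OF fin] sum_product by simp
    also have "\<dots> / D y = (\<Sum>z\<in>F. \<Sum>t\<in>F. if agr P y z \<and> agr Q y t then 1 / D y else 0)"
      unfolding sum_divide_distrib by (intro sum.cong refl) simp
    finally show "real (cnt F P y) * real (cnt F Q y) / D y = (\<Sum>z\<in>F. \<Sum>t\<in>F. if agr P y z \<and> agr Q y t then 1 / D y else 0)" .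
  qed
  also have "\<dots> = (\<Sum>z\<in>F. \<Sum>y\<in>F. \<Sum>t\<in>F. if agr P y z \<and> agr Q y t then 1 / D y else 0)"
    by (rule sum.swap)
  also have "\<dots> = (\<Sum>z\<in>F. \<Sum>t\<in>F. \<Sum>y\<in>F. if agr P y z \<and> agr Q y t then 1 / D y else 0)"
    by (rule sum.cong[OF refl], rule sum.swap)
  also have "\<dots> \<le> (\<Sum>z\<in>F. \<Sum>t\<in>F. if agr (P\<inter>Q) z t then 1 / real (cnt F (P\<inter>Q) z) else 0)"
  proof (rule sum_mono, rule sum_mono)
    fix z t assume z: "z \<in> F" and t: "t \<in> F"
    define Y where "Y = {y\<in>F. agr P y z \<and> agr Q y t}"
    have finY: "finite Y" using fin Y_def by simp
    have eq: "(\<Sum>y\<in>F. if agr P y z \<and> agr Q y t then 1 / D y else 0) = (\<Sum>y\<in>Y. 1 / D y)"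
      unfolding Y_def by (simp add: sum.inter_filter[OF fin])
    show "(\<Sum>y\<in>F. if agr P y z \<and> agr Q y t then 1 / D y else 0)
        \<le> (if agr (P\<inter>Q) z t then 1 / real (cnt F (P\<inter>Q) z) else 0)"
    proof (cases "Y = {}")
      case True
      then show ?thesis unfolding eq by simp
    next
      case False
      then obtain y0 where y0: "y0 \<in> Y" by blast
      have zt: "agr (P\<inter>Q) z t" using y0 unfolding Y_def agr_def by auto
      have cz: "cnt F (P\<inter>Q) z > 0" using cnt_pos[OF fin z] .
      have "(\<Sum>y\<in>Y. 1 / D y) \<le> (\<Sum>y\<in>Y. 1 / (real (card Y) * real (cnt F (P\<inter>Q) z)))"
      proof (rule sum_mono)
        fix y assume y: "y \<in> Y"
        have yF: "y \<in> F" using y Y_def by simp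
        have c1: "cnt F (P\<inter>Q) y = cnt F (P\<inter>Q) z"
          apply (rule cnt_cong) using y unfolding Y_def agr_def by auto
        have "Y \<subseteq> {w\<in>F. agr (P\<union>Q) y w}" using y unfolding Y_def agr_def by auto
        hence c2: "card Y \<le> cnt F (P\<union>Q) y" unfolding cnt_def using fin by (simp add: card_mono)
        have "card Y > 0" using False finY by auto
        hence "real (card Y) * real (cnt F (P\<inter>Q) z) \<le> D y" "0 < real (card Y) * real (cnt F (P\<inter>Q) z)"
          unfolding D_def c1 using c2 cz by (simp_all add: mult_right_mono)
        thus "1 / D y \<le> 1 / (real (card Y) * real (cnt F (P\<inter>Q) z))"
          by (simp add: frac_le)
      qed
      also have "\<dots> = 1 / real (cnt F (P\<inter>Q) z)" using False finY by simp
      finally show ?thesis unfolding eq using zt by simp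
    qed
  qed
  also have "\<dots> = (\<Sum>z\<in>F. 1)"
  proof (rule sum.cong[OF refl])
    fix z assume z: "z \<in> F"
    have "(\<Sum>t\<in>F. if agr (P\<inter>Q) z t then 1 / real (cnt F (P\<inter>Q) z) else 0)
        = real (cnt F (P\<inter>Q) z) * (1 / real (cnt F (P\<inter>Q) z))"
      unfolding cnt_def card_filter_sum[OF fin] sum_distrib_right
      by (rule sum.cong) auto
    also have "\<dots> = 1" using cnt_pos[OF fin z, of "P\<inter>Q"] by simp
    finally show "(\<Sum>t\<in>F. if agr (P\<inter>Q) z t then 1 / real (cnt F (P\<inter>Q) z) else 0) = 1" .
  qed
  finally show ?thesis unfolding D_def by simp
qed

lemma Ent_submod:
  assumes fin: "finite F"
  shows "Ent F P + Ent F Q \<le> Ent F (P\<union>Q) + Ent F (P\<inter>Q)"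
proof -
  let ?r = "\<lambda>y. real (cnt F P y) * real (cnt F Q y) / (real (cnt F (P\<union>Q) y) * real (cnt F (P\<inter>Q) y))"
  have "Ent F P + Ent F Q - Ent F (P\<union>Q) - Ent F (P\<inter>Q) = (\<Sum>y\<in>F. ln (?r y))"
    unfolding Ent_def sum_subtractf[symmetric] sum.distrib[symmetric]
  proof (rule sum.cong[OF refl])
    fix y assume y: "y \<in> F"
    note p = cnt_pos[OF fin y]
    show "ln (real (cnt F P y)) + ln (real (cnt F Q y)) - ln (real (cnt F (P \<union> Q) y)) - ln (real (cnt F (P \<inter> Q) y)) = ln (?r y)"
      using p[of P] p[of Q] p[of "P\<union>Q"] p[of "P\<inter>Q"] by (simp add: ln_mult ln_div)
  qed
  also have "\<dots> \<le> (\<Sum>y\<in>F. ?r y - 1)"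
  proof (rule sum_mono)
    fix y assume y: "y \<in> F"
    note p = cnt_pos[OF fin y]
    show "ln (?r y) \<le> ?r y - 1"
      by (rule ln_le_minus_one) (use p[of P] p[of Q] p[of "P\<union>Q"] p[of "P\<inter>Q"] in simp)
  qed
  also have "\<dots> \<le> 0" using ratio_sum_le[OF fin, of P Q] by (simp add: sum_subtractf)
  finally show ?thesis by simp
qed



lemma Ent_insert_step:
  assumes fin: "finite F" and A: "A \<subseteq> {..<b}"
  shows "Ent F {..<b} - Ent F ({..<Suc b}) \<le> Ent F A - Ent F (insert b A)"
proof -
  have "Ent F (insert b A) + Ent F {..<b} \<le> Ent F (insert b A \<union> {..<b}) + Ent F (insert b A \<inter> {..<b})"
    by (rule Ent_submod[OF fin])
  moreover have "insert b A \<union> {..<b} = {..<Suc b}" using A by auto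
  moreover have "insert b A \<inter> {..<b} = A" using A by auto
  ultimately show ?thesis by simp
qed

lemma Ent_chain_le:
  assumes fin: "finite F" and finA: "finite A"
  shows "(\<Sum>j\<in>A. Ent F {..<j} - Ent F ({..<Suc j})) \<le> Ent F {} - Ent F A"
  using finA
proof (induction A rule: finite_linorder_max_induct)
  case empty
  then show ?case by simp
next
  case (insert b A)
  have bA: "b \<notin> A" using insert by auto
  have "A \<subseteq> {..<b}" using insert by auto
  note st = Ent_insert_step[OF fin this]
  show ?case using insert.IH st by (simp add: sum.insert[OF insert.hyps(1) bA])
qed

lemma Ent_chain_eq:
  "(\<Sum>j<n. Ent F {..<j} - Ent F ({..<Suc j})) = Ent F {} - Ent F {..<n}"
  by (induction n) simp_all

lemma Ent_empty: "Ent F {} = real (card F) * ln (real (card F))"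
proof -
  have "cnt F {} y = card F" for y
  proof -
    have "{z\<in>F. agr {} y z} = F" unfolding agr_def by blast
    thus ?thesis unfolding cnt_def by simp
  qed
  hence "Ent F {} = (\<Sum>y\<in>F. ln (real (card F)))" unfolding Ent_def by presburger
  also have "\<dots> = real (card F) * ln (real (card F))" by (rule sum_constant)
  finally show ?thesis .
qed

lemma Ent_full:
  assumes Fc: "F \<subseteq> cube I m"
  shows "Ent F I = 0"
proof -
  have "cnt F I y = 1" if y: "y \<in> F" for y
  proof -
    have yc: "y \<in> PiE I (\<lambda>_. {..<m})" using y Fc unfolding cube_def by blast
    have "{z\<in>F. agr I y z} = {y}"
    proof (rule set_eqI, rule iffI)
      fix z assume "z \<in> {z\<in>F. agr I y z}"
      hence zF: "z \<in> F" and ag: "agr I y z" by auto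
      have zc: "z \<in> PiE I (\<lambda>_. {..<m})" using zF Fc unfolding cube_def by blast
      have "z = y"
      proof (rule ext)
        fix i show "z i = y i"
        proof (cases "i \<in> I")
          case True then show ?thesis using ag unfolding agr_def by simp
        next
          case False
          then show ?thesis using PiE_arb[OF yc False] PiE_arb[OF zc False] by simp
        qed
      qed
      thus "z \<in> {y}" by simp
    next
      fix z assume "z \<in> {y}"
      thus "z \<in> {z\<in>F. agr I y z}" using y unfolding agr_def by simp
    qed
    then show ?thesis unfolding cnt_def by simp
  qed
  hence "Ent F I = (\<Sum>y\<in>F. 0)" unfolding Ent_def by (intro sum.cong refl) simp
  thus ?thesis by simp
qed

lemma han:
  assumes fin: "finite F" and Fc: "F \<subseteq> cube {..<n} m"
  shows "(\<Sum>S\<in>{S. S \<subseteq> {..<n} \<and> card S = s}. Ent F S) \<le> real ((n - 1) choose s) * Ent F {}"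
proof (cases "n = 0")
  case True
  show ?thesis
  proof (cases "s = 0")
    case True
    have e: "{S. S \<subseteq> {..<n} \<and> card S = s} = {{}}" using \<open>n = 0\<close> True by auto
    show ?thesis unfolding e using \<open>n=0\<close> True by simp
  next
    case False
    have e: "{S. S \<subseteq> {..<n} \<and> card S = s} = {}" using \<open>n = 0\<close> False by auto
    show ?thesis unfolding e using \<open>n=0\<close> False by (simp add: binomial_eq_0)
  qed
next
  case False
  define Sets where "Sets = {S. S \<subseteq> {..<n} \<and> card S = s}"
  define a where "a j = Ent F {..<j} - Ent F ({..<Suc j})" for j
  define B where "B = n choose s"
  define b' where "b' = (n - 1) choose s"
  have finSets: "finite Sets" unfolding Sets_def by simp
  have cardSets: "card Sets = B" unfolding Sets_def B_def using n_subsets[of "{..<n}" s] by simp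
  have kj: "real (card {S\<in>Sets. j \<in> S}) = real B - real b'" if j: "j < n" for j
  proof -
    have "{S\<in>Sets. j \<notin> S} = {S. S \<subseteq> {..<n} - {j} \<and> card S = s}" unfolding Sets_def by auto
    hence c2: "card {S\<in>Sets. j \<notin> S} = b'" using n_subsets[of "{..<n} - {j}" s] j unfolding b'_def by simp
    have un: "Sets = {S\<in>Sets. j \<in> S} \<union> {S\<in>Sets. j \<notin> S}" by blast
    have "card ({S\<in>Sets. j \<in> S} \<union> {S\<in>Sets. j \<notin> S}) = card {S\<in>Sets. j \<in> S} + card {S\<in>Sets. j \<notin> S}"
      by (rule card_Un_disjoint) (use finSets in auto)
    hence "card Sets = card {S\<in>Sets. j \<in> S} + card {S\<in>Sets. j \<notin> S}" using un by simp
    then show ?thesis using c2 cardSets by simp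
  qed
  have E0: "Ent F {..<n} = 0" using Ent_full[OF Fc] .
  have "(\<Sum>S\<in>Sets. \<Sum>j\<in>S. a j) = (\<Sum>S\<in>Sets. \<Sum>j<n. if j \<in> S then a j else 0)"
  proof (rule sum.cong[OF refl])
    fix S assume "S \<in> Sets"
    hence "S \<subseteq> {..<n}" unfolding Sets_def by simp
    hence e: "{j\<in>{..<n}. j \<in> S} = S" by blast
    have "(\<Sum>j<n. if j \<in> S then a j else 0) = sum a {j\<in>{..<n}. j \<in> S}"
      by (rule sum.inter_filter[symmetric]) simp
    then show "(\<Sum>j\<in>S. a j) = (\<Sum>j<n. if j \<in> S then a j else 0)" using e by simp
  qed
  also have "\<dots> = (\<Sum>j<n. \<Sum>S\<in>Sets. if j \<in> S then a j else 0)" by (rule sum.swap)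
  also have "\<dots> = (\<Sum>j<n. a j * (real B - real b'))"
  proof (rule sum.cong[OF refl])
    fix j assume "j \<in> {..<n}"
    have "(\<Sum>S\<in>Sets. if j \<in> S then a j else 0) = a j * real (card {S\<in>Sets. j \<in> S})"
      using finSets by (simp add: sum.inter_filter[symmetric])
    then show "(\<Sum>S\<in>Sets. if j \<in> S then a j else 0) = a j * (real B - real b')"
      using kj \<open>j \<in> {..<n}\<close> by simp
  qed
  also have "\<dots> = (real B - real b') * Ent F {}"
    unfolding sum_distrib_right[symmetric] a_def Ent_chain_eq E0 by simp
  finally have 1: "(\<Sum>S\<in>Sets. \<Sum>j\<in>S. a j) = (real B - real b') * Ent F {}" .
  have "(\<Sum>S\<in>Sets. \<Sum>j\<in>S. a j) \<le> (\<Sum>S\<in>Sets. Ent F {} - Ent F S)"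
  proof (rule sum_mono)
    fix S assume "S \<in> Sets"
    hence "finite S" unfolding Sets_def using finite_subset by auto
    then show "(\<Sum>j\<in>S. a j) \<le> Ent F {} - Ent F S" unfolding a_def by (rule Ent_chain_le[OF fin])
  qed
  also have "\<dots> = real B * Ent F {} - (\<Sum>S\<in>Sets. Ent F S)"
    by (simp add: sum_subtractf cardSets)
  finally show ?thesis using 1 unfolding Sets_def[symmetric] b'_def[symmetric] by (simp add: algebra_simps)
qed



lemma card_cube: "finite T \<Longrightarrow> card (cube T m) = m ^ card T"
  unfolding cube_def by (simp add: card_PiE)

lemma finite_cube: "finite T \<Longrightarrow> finite (cube T m)"
  unfolding cube_def by (simp add: finite_PiE)

lemma card_restr:
  assumes S: "S \<subseteq> {..<n}" and Fc: "F \<subseteq> cube {..<n} m"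
  shows "card (restr n m F S x) = cnt F S x"
proof -
  let ?h = "\<lambda>z. (\<lambda>i. if i \<in> S then x i else z i)"
  have inj: "inj_on ?h (restr n m F S x)"
  proof (rule inj_onI)
    fix z1 z2 assume z1: "z1 \<in> restr n m F S x" and z2: "z2 \<in> restr n m F S x" and eq: "?h z1 = ?h z2"
    have z1c: "z1 \<in> PiE ({..<n} - S) (\<lambda>_. {..<m})" using z1 unfolding restr_def cube_def by simp
    have z2c: "z2 \<in> PiE ({..<n} - S) (\<lambda>_. {..<m})" using z2 unfolding restr_def cube_def by simp
    show "z1 = z2"
    proof (rule ext)
      fix i show "z1 i = z2 i"
      proof (cases "i \<in> S")
        case True
        then have "i \<notin> {..<n} - S" by simp
        then show ?thesis using PiE_arb[OF z1c] PiE_arb[OF z2c] by simp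
      next
        case False then show ?thesis using fun_cong[OF eq, of i] by simp
      qed
    qed
  qed
  have img: "?h ` restr n m F S x = {z\<in>F. agr S x z}"
  proof
    show "?h ` restr n m F S x \<subseteq> {z\<in>F. agr S x z}" unfolding restr_def agr_def by auto
    show "{z\<in>F. agr S x z} \<subseteq> ?h ` restr n m F S x"
    proof
      fix y assume y: "y \<in> {z\<in>F. agr S x z}"
      hence yF: "y \<in> F" and ag: "\<forall>i\<in>S. x i = y i" unfolding agr_def by auto
      have yc: "y \<in> PiE {..<n} (\<lambda>_. {..<m})" using yF Fc unfolding cube_def by auto
      define z where "z = restrict y ({..<n} - S)"
      have zc: "z \<in> cube ({..<n} - S) m" using yc unfolding z_def cube_def restrict_PiE_iff by auto
      have hz: "?h z = y"
      proof (rule ext)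
        fix i show "?h z i = y i"
        proof (cases "i \<in> S")
          case True then show ?thesis using ag by simp
        next
          case False
          show ?thesis
          proof (cases "i < n")
            case True then show ?thesis using False unfolding z_def by simp
          next
            case nl: False
            then have "y i = undefined" using PiE_arb[OF yc] by simp
            then show ?thesis using False nl unfolding z_def by simp
          qed
        qed
      qed
      have "z \<in> restr n m F S x" using zc hz yF unfolding restr_def by simp
      then show "y \<in> ?h ` restr n m F S x" using hz by (metis image_eqI)
    qed
  qed
  show ?thesis unfolding cnt_def using card_image[OF inj] img by simp
qed

lemma sum_cnt_mult:
  assumes S: "S \<subseteq> I" and Fc: "F \<subseteq> cube I m" and fin: "finite F" and finS: "finite S"
  shows "(\<Sum>x\<in>cube S m. real (cnt F S x) * g x) = (\<Sum>y\<in>F. g (restrict y S))"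
proof -
  have "(\<Sum>x\<in>cube S m. real (cnt F S x) * g x) = (\<Sum>x\<in>cube S m. \<Sum>y\<in>F. if agr S x y then g x else 0)"
    unfolding cnt_def card_filter_sum[OF fin] sum_distrib_right by (intro sum.cong refl) simp
  also have "\<dots> = (\<Sum>y\<in>F. \<Sum>x\<in>cube S m. if agr S x y then g x else 0)" by (rule sum.swap)
  also have "\<dots> = (\<Sum>y\<in>F. g (restrict y S))"
  proof (rule sum.cong[OF refl])
    fix y assume y: "y \<in> F"
    have yc: "y \<in> PiE I (\<lambda>_. {..<m})" using y Fc unfolding cube_def by auto
    have "{x\<in>cube S m. agr S x y} = {restrict y S}"
    proof safe
      fix x assume x: "x \<in> cube S m" "agr S x y"
      have xc: "x \<in> PiE S (\<lambda>_. {..<m})" using x unfolding cube_def by simp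
      show "x = restrict y S"
      proof (rule ext)
        fix i show "x i = restrict y S i"
        proof (cases "i \<in> S")
          case True then show ?thesis using x(2) unfolding agr_def by simp
        next
          case False then show ?thesis using PiE_arb[OF xc] by simp
        qed
      qed
    next
      show "restrict y S \<in> cube S m" using yc S unfolding cube_def restrict_PiE_iff by auto
      show "agr S (restrict y S) y" unfolding agr_def by simp
    qed
    moreover have "(\<Sum>x\<in>cube S m. if agr S x y then g x else 0) = sum g {x\<in>cube S m. agr S x y}"
      by (simp add: sum.inter_filter[OF finite_cube[OF finS]])
    ultimately show "(\<Sum>x\<in>cube S m. if agr S x y then g x else 0) = g (restrict y S)" by simp
  qed
  finally show ?thesis .
qed

lemma cnt_restrict: "cnt F S (restrict y S) = cnt F S y"
  by (rule cnt_cong) (simp add: agr_def)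

lemma phi_nonneg: "0 \<le> (q::real) \<Longrightarrow> 0 \<le> q * ln q - q + 1"
proof (cases "q = 0")
  case False
  assume q: "0 \<le> q"
  hence qp: "q > 0" using False by simp
  have "ln (1/q) \<le> 1/q - 1" using qp by (intro ln_le_minus_one) simp
  hence "- ln q \<le> 1/q - 1" using qp by (simp add: ln_div)
  hence "q * (- ln q) \<le> q * (1/q - 1)" using qp by (intro mult_left_mono) auto
  thus ?thesis using qp by (simp add: algebra_simps)
qed simp

lemma phi_mono:
  assumes q: "0 \<le> (q::real)" "q \<le> p" and p: "0 < p" "p \<le> 1"
  shows "p * ln p - p + 1 \<le> q * ln q - q + 1"
proof (cases "q = 0")
  case True
  have "ln p \<le> 0" using p by simp
  hence "p * ln p \<le> 0" using p by (simp add: mult_nonneg_nonpos)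
  moreover have "q * ln q - q + 1 = 1" using True by simp
  ultimately show ?thesis using p by linarith
next
  case False
  hence qp: "q > 0" using q by simp
  have "ln p - ln q \<le> (p - q) / q" by (rule ln_diff_le) (use p qp in auto)
  hence 1: "q * (ln p - ln q) \<le> p - q" using qp by (simp add: field_simps)
  have "ln p \<le> 0" using p by simp
  hence 2: "(p - q) * ln p \<le> 0" using q by (simp add: mult_nonneg_nonpos)
  have "p * ln p - q * ln q = q * (ln p - ln q) + (p - q) * ln p" by (simp add: algebra_simps)
  thus ?thesis using 1 2 by linarith
qed

lemma c_pos:
  assumes "0 < (p::real)" "p < 1"
  shows "0 < p * ln p - p + 1"
proof -
  have "ln 1 - ln p < (1 - p) / p" by (rule ln_diff_less) (use assms in auto)
  hence "- ln p * p < 1 - p" using assms by (simp add: field_simps)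
  thus ?thesis by (simp add: algebra_simps)
qed



lemma main:
  fixes \<delta> :: real and s m n :: nat and F :: "(nat \<Rightarrow> nat) set"
  assumes d: "0 < \<delta>" "\<delta> < 1"
  and ns: "s \<le> n" and Fc: "F \<subseteq> cube {..<n} m"
  and mub: "exp (- real n / ((real s + 1) / (\<delta> * ((1-\<delta>) * ln (1-\<delta>) - (1-\<delta>) + 1)))) \<le> mu {..<n} m F"
  shows "1 - \<delta> \<le> real (card {(S, x) \<in> samples n m s. mu ({..<n} - S) m (restr n m F S x) \<ge> (1 - \<delta>) * mu {..<n} m F})
         / real (card (samples n m s))"
proof -
  define p where "p = 1 - \<delta>"
  define c where "c = p * ln p - p + 1"
  define C where "C = (real s + 1) / (\<delta> * c)"
  have p: "0 < p" "p < 1" using d p_def by auto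
  have cpos: "c > 0" using c_pos[OF p] c_def by simp
  have Cpos: "C > 0" unfolding C_def using d cpos by simp
  define I where "I = {..<n}"
  have mub': "exp (- real n / C) \<le> mu I m F" using mub unfolding C_def c_def p_def I_def .
  have finF: "finite F" using Fc finite_subset finite_cube[of I m] I_def by blast
  define N where "N = card F"
  define K where "K = card (cube I m)"
  have K: "K = m ^ n" using card_cube[of I m] I_def K_def by simp
  have muF: "mu I m F = real N / real K" unfolding mu_def N_def K_def ..
  have mupos: "mu I m F > 0" using mub' exp_gt_zero[of "- real n / C"] by linarith
  hence NK: "real N > 0 \<and> real K > 0" using muF by (simp add: zero_less_divide_iff)
  hence Npos: "real N > 0" and Kpos: "K > 0" by auto
  have m_or: "0 < m \<or> n = 0" using Kpos K by (cases n) auto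
  define M where "M = real m ^ s"
  define K' where "K' = real m ^ (n - s)"
  have mpow: "real K = M * K'" unfolding M_def K'_def K using ns by (simp add: power_add[symmetric])
  have Mpos: "M > 0" using m_or ns unfolding M_def by auto
  have K'pos: "K' > 0" using m_or ns unfolding K'_def by auto
  define Sets where "Sets = {S. S \<subseteq> I \<and> card S = s}"
  define B where "B = n choose s"
  define b' where "b' = (n - 1) choose s"
  have finSets: "finite Sets" unfolding Sets_def I_def by simp
  have cardSets: "card Sets = B" unfolding Sets_def B_def I_def using n_subsets[of "{..<n}" s] by simp
  have Bpos: "B > 0" unfolding B_def using ns by simp
  have SetsD: "finite S" "S \<subseteq> I" "card S = s" if "S \<in> Sets" for S
    using that unfolding Sets_def I_def by (auto intro: finite_subset)
  define bad where "bad S = {x \<in> cube S m. real (cnt F S x) * M < p * real N}" for S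
  define good where "good S = {x \<in> cube S m. mu (I - S) m (restr n m F S x) \<ge> p * mu I m F}" for S
  have equiv: "(mu (I - S) m (restr n m F S x) \<ge> p * mu I m F) \<longleftrightarrow> \<not> (real (cnt F S x) * M < p * real N)"
    if S: "S \<in> Sets" for S x
  proof -
    have cd: "card (I - S) = n - s" using SetsD[OF S] I_def by (simp add: card_Diff_subset)
    have finIS: "finite (I - S)" using I_def by simp
    have m1: "mu (I - S) m (restr n m F S x) = real (cnt F S x) / K'"
      unfolding mu_def card_restr[OF SetsD(2)[OF S, unfolded I_def] Fc] card_cube[OF finIS] cd K'_def
      by simp
    have m2: "p * mu I m F = (p * real N / M) / K'" using muF mpow by simp
    have "(p * real N / M) / K' \<le> real (cnt F S x) / K' \<longleftrightarrow> p * real N / M \<le> real (cnt F S x)"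
      by (subst divide_le_cancel) (use K'pos in simp)
    also have "\<dots> \<longleftrightarrow> p * real N \<le> real (cnt F S x) * M" using Mpos by (simp add: pos_divide_le_eq)
    finally show ?thesis unfolding m1 m2 by (simp add: not_less)
  qed
  have card_gb: "real (card (good S)) = M - real (card (bad S))" if S: "S \<in> Sets" for S
  proof -
    have fc: "finite (cube S m)" using finite_cube SetsD[OF S] by simp
    have un: "good S \<union> bad S = cube S m" unfolding good_def bad_def using equiv[OF S] by auto
    have dj: "good S \<inter> bad S = {}" unfolding good_def bad_def using equiv[OF S] by auto
    have "card (good S) + card (bad S) = card (cube S m)"
      using card_Un_disjoint[of "good S" "bad S"] un dj fc by (metis finite_Un)
    also have "\<dots> = m ^ s" using card_cube SetsD[OF S] by simp
    finally have "real (card (good S)) + real (card (bad S)) = M" unfolding M_def by (metis of_nat_add of_nat_power)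
    thus ?thesis by simp
  qed
  have samples_eq: "samples n m s = Sigma Sets (\<lambda>S. cube S m)" unfolding samples_def Sets_def I_def by auto
  have good_eq: "{(S, x) \<in> samples n m s. mu ({..<n} - S) m (restr n m F S x) \<ge> (1 - \<delta>) * mu {..<n} m F} = Sigma Sets good"
    unfolding samples_def Sets_def good_def I_def p_def by auto
  have card_samples: "real (card (samples n m s)) = real B * M"
  proof -
    have "card (samples n m s) = (\<Sum>S\<in>Sets. card (cube S m))"
      unfolding samples_eq using finSets SetsD finite_cube by (simp add: card_SigmaI)
    also have "\<dots> = (\<Sum>S\<in>Sets. m ^ s)" using SetsD card_cube by (intro sum.cong refl) simp
    finally show ?thesis using cardSets unfolding M_def by simp
  qed
  have card_good: "real (card (Sigma Sets good)) = real B * M - (\<Sum>S\<in>Sets. real (card (bad S)))"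
  proof -
    have "card (Sigma Sets good) = (\<Sum>S\<in>Sets. card (good S))"
      using finSets SetsD finite_cube unfolding good_def by (simp add: card_SigmaI)
    hence "real (card (Sigma Sets good)) = (\<Sum>S\<in>Sets. real (card (good S)))" by simp
    also have "\<dots> = (\<Sum>S\<in>Sets. M - real (card (bad S)))" using card_gb by (intro sum.cong refl) simp
    finally show ?thesis using cardSets by (simp add: sum_subtractf)
  qed
  have perS: "c * real (card (bad S)) \<le> (M / real N) * Ent F S + M * (ln M - ln (real N))"
    if S: "S \<in> Sets" for S
  proof -
    define q where "q x = real (cnt F S x) * M / real N" for x
    define g where "g x = (M / real N) * (ln (real (cnt F S x)) + ln M - ln (real N)) - M / real N" for x
    have fc: "finite (cube S m)" using finite_cube SetsD[OF S] by simp
    have each: "q x * ln (q x) - q x + 1 = real (cnt F S x) * g x + 1" for x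
    proof (cases "cnt F S x = 0")
      case True then show ?thesis unfolding q_def g_def by simp
    next
      case False
      hence cp: "real (cnt F S x) > 0" by simp
      have lq: "ln (q x) = ln (real (cnt F S x)) + ln M - ln (real N)"
        unfolding q_def using cp Mpos Npos by (simp add: ln_mult ln_div)
      have "q x * ln (q x) - q x + 1 = q x * (ln (real (cnt F S x)) + ln M - ln (real N)) - q x + 1"
        unfolding lq ..
      also have "\<dots> = real (cnt F S x) * g x + 1" unfolding q_def g_def by (simp add: algebra_simps add_divide_distrib)
      finally show ?thesis .
    qed
    have "(\<Sum>x\<in>cube S m. q x * ln (q x) - q x + 1) = (\<Sum>x\<in>cube S m. real (cnt F S x) * g x) + real (card (cube S m))"
      unfolding each by (simp add: sum.distrib)
    also have "(\<Sum>x\<in>cube S m. real (cnt F S x) * g x) = (\<Sum>y\<in>F. g (restrict y S))"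
      by (rule sum_cnt_mult[OF SetsD(2)[OF S] _ finF SetsD(1)[OF S]]) (use Fc I_def in simp)
    also have "\<dots> = (\<Sum>y\<in>F. (M / real N) * ln (real (cnt F S y)) + ((M / real N) * (ln M - ln (real N)) - M / real N))"
      unfolding g_def cnt_restrict by (intro sum.cong refl) (simp add: algebra_simps)
    also have "\<dots> = (M / real N) * Ent F S + real N * ((M / real N) * (ln M - ln (real N)) - M / real N)"
      unfolding Ent_def by (simp add: sum.distrib sum_distrib_left N_def)
    also have "real (card (cube S m)) = M" using card_cube SetsD[OF S] unfolding M_def by simp
    finally have phis: "(\<Sum>x\<in>cube S m. q x * ln (q x) - q x + 1) = (M / real N) * Ent F S + M * (ln M - ln (real N))"
      using Npos by (simp add: algebra_simps)
    have "c * real (card (bad S)) = (\<Sum>x\<in>bad S. c)" by simp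
    also have "\<dots> \<le> (\<Sum>x\<in>bad S. q x * ln (q x) - q x + 1)"
    proof (rule sum_mono)
      fix x assume x: "x \<in> bad S"
      have q0: "0 \<le> q x" unfolding q_def using Mpos Npos by simp
      have "q x < p" using x Npos unfolding q_def bad_def by (simp add: pos_divide_less_eq)
      then show "c \<le> q x * ln (q x) - q x + 1" unfolding c_def
        using phi_mono[OF q0 _ p(1)] p by simp
    qed
    also have "\<dots> \<le> (\<Sum>x\<in>cube S m. q x * ln (q x) - q x + 1)"
    proof (rule sum_mono2[OF fc])
      show "bad S \<subseteq> cube S m" unfolding bad_def by auto
      fix x show "0 \<le> q x * ln (q x) - q x + 1"
        by (rule phi_nonneg) (unfold q_def, use Mpos Npos in simp)
    qed
    finally show ?thesis using phis by simp
  qed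
  have sumbad1: "c * (\<Sum>S\<in>Sets. real (card (bad S))) \<le> (M / real N) * (\<Sum>S\<in>Sets. Ent F S) + real B * (M * (ln M - ln (real N)))"
  proof -
    have "c * (\<Sum>S\<in>Sets. real (card (bad S))) = (\<Sum>S\<in>Sets. c * real (card (bad S)))" by (simp add: sum_distrib_left)
    also have "\<dots> \<le> (\<Sum>S\<in>Sets. (M / real N) * Ent F S + M * (ln M - ln (real N)))" using perS by (intro sum_mono) simp
    also have "\<dots> = (M / real N) * (\<Sum>S\<in>Sets. Ent F S) + real B * (M * (ln M - ln (real N)))"
      using cardSets by (simp add: sum.distrib sum_distrib_left)
    finally show ?thesis .
  qed
  have hanb: "(\<Sum>S\<in>Sets. Ent F S) \<le> real b' * (real N * ln (real N))"
    using han[OF finF Fc, of s] unfolding Sets_def I_def b'_def Ent_empty N_def by simp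
  have "(M / real N) * (\<Sum>S\<in>Sets. Ent F S) \<le> (M / real N) * (real b' * (real N * ln (real N)))"
    using hanb Mpos Npos by (intro mult_left_mono) simp_all
  also have "\<dots> = M * (real b' * ln (real N))" using Npos by simp
  finally have sumbad2: "c * (\<Sum>S\<in>Sets. real (card (bad S))) \<le> M * (real b' * ln (real N) + real B * ln M - real B * ln (real N))"
    using sumbad1 by (simp add: algebra_simps)
  define X where "X = real b' * ln (real N) + real B * ln M - real B * ln (real N)"
  have Xb: "X \<le> real B * real s / C"
  proof (cases "n = 0")
    case True
    hence "s = 0" using ns by simp
    then show ?thesis unfolding X_def M_def b'_def B_def using True by simp
  next
    case False
    hence npos: "n > 0" by simp
    hence mpos: "m > 0" using m_or by simp
    have lnM: "ln M = real s * ln (real m)" unfolding M_def by (simp add: ln_realpow)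
    have "- real n / C \<le> ln (mu I m F)" using mub' mupos by (simp add: ln_ge_iff)
    also have "ln (mu I m F) = ln (real N) - real n * ln (real m)"
      using muF Npos Kpos K by (simp add: ln_div ln_realpow)
    finally have lnb: "real n * ln (real m) - ln (real N) \<le> real n / C" by simp
    have e1: "real n * real b' = (real n - real s) * real B"
    proof -
      have "(n - s) * (n choose s) = n * ((n - 1) choose s)" by (rule binomial_absorb_comp)
      hence "real ((n - s) * B) = real (n * b')" unfolding B_def b'_def by simp
      thus ?thesis using ns by (simp add: of_nat_diff)
    qed
    have "real n * X = (real n * real b') * ln (real N) + real n * real B * real s * ln (real m) - real n * real B * ln (real N)"
      unfolding X_def lnM by (simp add: algebra_simps)
    also have "\<dots> = real B * real s * (real n * ln (real m) - ln (real N))"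
      unfolding e1 by (simp add: algebra_simps)
    also have "\<dots> \<le> real B * real s * (real n / C)"
      using lnb by (intro mult_left_mono) simp_all
    also have "\<dots> = real n * (real B * real s / C)" by simp
    finally have fin: "real n * X \<le> real n * (real B * real s / C)" .
    have nr: "real n > 0" using npos by simp
    from fin show ?thesis using mult_le_cancel_left_pos[OF nr, of X "real B * real s / C"] by blast
  qed
  have "c * (\<Sum>S\<in>Sets. real (card (bad S))) \<le> M * (real B * real s / C)"
    using sumbad2 Xb Mpos unfolding X_def[symmetric] by (meson mult_left_mono less_imp_le order_trans)
  also have "M * (real B * real s / C) = c * (M * real B * (real s * \<delta> / (real s + 1)))"
    unfolding C_def using cpos d by (simp add: field_simps)
  finally have cb: "c * (\<Sum>S\<in>Sets. real (card (bad S))) \<le> c * (M * real B * (real s * \<delta> / (real s + 1)))" .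
  have "(\<Sum>S\<in>Sets. real (card (bad S))) \<le> M * real B * (real s * \<delta> / (real s + 1))"
    using cb mult_le_cancel_left_pos[OF cpos, of "\<Sum>S\<in>Sets. real (card (bad S))" "M * real B * (real s * \<delta> / (real s + 1))"] by blast
  also have "\<dots> \<le> M * real B * \<delta>"
  proof -
    have "real s * \<delta> / (real s + 1) \<le> \<delta>" using d by (simp add: field_simps)
    thus ?thesis using Mpos Bpos by (intro mult_left_mono) simp_all
  qed
  finally have badb: "(\<Sum>S\<in>Sets. real (card (bad S))) \<le> M * real B * \<delta>" .
  have BM: "real B * M > 0" using Bpos Mpos by simp
  have BM0: "real B * M \<noteq> 0" using Bpos Mpos by simp
  have "(real B * M - real B * M * \<delta>) / (real B * M) = (real B * M) / (real B * M) - (real B * M) * \<delta> / (real B * M)"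
    by (rule diff_divide_distrib)
  also have "\<dots> = 1 - \<delta>" using BM0 by simp
  finally have "1 - \<delta> = (real B * M - real B * M * \<delta>) / (real B * M)" by simp
  also have "\<dots> \<le> (real B * M - (\<Sum>S\<in>Sets. real (card (bad S)))) / (real B * M)"
    using badb BM by (intro divide_right_mono) (simp_all add: algebra_simps)
  finally show ?thesis unfolding good_eq card_good card_samples .
qed

theorem proposition6p1:
  shows "\<forall>\<delta>::real. \<delta> > 0 \<longrightarrow> (\<forall>s::nat. \<exists>C::real. C > 0 \<and>
    (\<forall>(m::nat) (n::nat) (F::(nat \<Rightarrow> nat) set).
       n \<ge> s \<longrightarrow> F \<subseteq> cube {..<n} m \<longrightarrow> mu {..<n} m F \<ge> exp (- real n / C) \<longrightarrow>
       real (card {(S, x) \<in> samples n m s.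
                 mu ({..<n} - S) m (restr n m F S x) \<ge> (1 - \<delta>) * mu {..<n} m F})
         / real (card (samples n m s)) \<ge> 1 - \<delta>))"
  apply (intro allI impI)
  subgoal premises prems for \<delta> s
  proof (cases "\<delta> < 1")
    case True
    define C where "C = (real s + 1) / (\<delta> * ((1-\<delta>) * ln (1-\<delta>) - (1-\<delta>) + 1))"
    have Cpos: "C > 0" using c_pos[of "1-\<delta>"] True prems unfolding C_def by simp
    show ?thesis
      apply (rule exI[of _ C])
      using Cpos main[OF prems True] unfolding C_def by blast
  next
    case False
    show ?thesis
      apply (rule exI[of _ 1])
      apply (intro conjI allI impI)
       apply simp
      apply (rule order_trans[of _ 0])
      using False by simp_all
  qed
  done

end
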